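(* Let $\mathcal G=(V_{\min},V_{\max},E,w,\lambda)$ be a discounted payoff game and $\varepsilon>0$. Let $\mathcal G'=(V_{\min},V_{\max},E,w',\lambda)$ be obtained from $\mathcal G$ by adding to every edge weight a value drawn independently and uniformly at random from $(-\varepsilon,\varepsilon)$. Then $\mathcal G'$ is almost surely sharp.
   Context: A discounted payoff game is a tuple $\mathcal G=(V_{\min},V_{\max},E,w,\lambda)$ with $V=V_{\min}\cup V_{\max}$ finite (disjoint union of Min and Max vertices), $E\subseteq V\times V$ with every vertex having an outgoing edge, $w:E\to\mathbb R$, $\lambda:E\to[0,1)$. $H$ is the system of inequations over $x\in\mathbb R^V$ containing, for each edge $e=(v,v')$, $x(v)\ge w_e+\lambda_e x(v')$ if $v\in V_{\max}$ and $x(v)\le w_e+\lambda_e x(v')$ if $v\in V_{\min}$. A basis of $H$ is a set of $|V|$ inequations of $H$ whose equality versions have a unique common solution; if that solution satisfies $H$ it is the basis valuation. The game is sharp if every basis valuation satisfies exactly $|V|$ inequations of $H$ with equality (equivalently, distinct bases have distinct basis valuations). *)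

theory Defs
  imports "HOL-Probability.Probability"
begin

text \<open>Vertices form a finite type 'v (so V = UNIV); a valuation is x :: 'v => real.
  Edges are pairs (v, v'); weights and discounts are functions on edges.\<close>

definition dpg :: "'v set \<Rightarrow> 'v set \<Rightarrow> ('v \<times> 'v) set \<Rightarrow> ('v \<times> 'v \<Rightarrow> real) \<Rightarrow> bool" where
  "dpg Vmin Vmax E lam \<longleftrightarrow>
     Vmin \<inter> Vmax = {} \<and> Vmin \<union> Vmax = UNIV \<and>
     (\<forall>v. \<exists>v'. (v, v') \<in> E) \<and>
     (\<forall>e\<in>E. 0 \<le> lam e \<and> lam e < 1)"

definition ineq_holds :: "'v set \<Rightarrow> 'v set \<Rightarrow> ('v \<times> 'v \<Rightarrow> real) \<Rightarrow> ('v \<times> 'v \<Rightarrow> real)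
    \<Rightarrow> 'v \<times> 'v \<Rightarrow> ('v \<Rightarrow> real) \<Rightarrow> bool" where
  "ineq_holds Vmin Vmax w lam e x \<longleftrightarrow>
     (fst e \<in> Vmax \<longrightarrow> x (fst e) \<ge> w e + lam e * x (snd e)) \<and>
     (fst e \<in> Vmin \<longrightarrow> x (fst e) \<le> w e + lam e * x (snd e))"

definition tight :: "('v \<times> 'v \<Rightarrow> real) \<Rightarrow> ('v \<times> 'v \<Rightarrow> real) \<Rightarrow> 'v \<times> 'v \<Rightarrow> ('v \<Rightarrow> real) \<Rightarrow> bool" where
  "tight w lam e x \<longleftrightarrow> x (fst e) = w e + lam e * x (snd e)"

definition is_basis :: "('v::finite \<times> 'v) set \<Rightarrow> ('v \<times> 'v \<Rightarrow> real) \<Rightarrow> ('v \<times> 'v \<Rightarrow> real)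
    \<Rightarrow> ('v \<times> 'v) set \<Rightarrow> bool" where
  "is_basis E w lam B \<longleftrightarrow> B \<subseteq> E \<and> card B = CARD('v) \<and> (\<exists>!x. \<forall>e\<in>B. tight w lam e x)"

definition basis_valuation :: "'v set \<Rightarrow> 'v set \<Rightarrow> ('v::finite \<times> 'v) set \<Rightarrow> ('v \<times> 'v \<Rightarrow> real)
    \<Rightarrow> ('v \<times> 'v \<Rightarrow> real) \<Rightarrow> ('v \<times> 'v) set \<Rightarrow> ('v \<Rightarrow> real) \<Rightarrow> bool" where
  "basis_valuation Vmin Vmax E w lam B x \<longleftrightarrow>
     is_basis E w lam B \<and> (\<forall>e\<in>B. tight w lam e x) \<and> (\<forall>e\<in>E. ineq_holds Vmin Vmax w lam e x)"

definition sharp :: "'v set \<Rightarrow> 'v set \<Rightarrow> ('v::finite \<times> 'v) set \<Rightarrow> ('v \<times> 'v \<Rightarrow> real)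
    \<Rightarrow> ('v \<times> 'v \<Rightarrow> real) \<Rightarrow> bool" where
  "sharp Vmin Vmax E w lam \<longleftrightarrow>
     (\<forall>B x. basis_valuation Vmin Vmax E w lam B x \<longrightarrow>
        card {e\<in>E. tight w lam e x} = CARD('v))"

end

theory Submission imports Defs "HOL-Library.Function_Algebras" begin

lemma graph_null:
  fixes M :: "'i \<Rightarrow> real measure" and h :: "('i \<Rightarrow> real) \<Rightarrow> real"
  assumes psf: "product_sigma_finite M"
    and E: "finite E" "e \<in> E"
    and sp: "\<And>i. space (M i) = UNIV"
    and at: "\<And>i c. emeasure (M i) {c} = 0"
    and sets: "\<And>i. sets (M i) = sets borel"
    and hm: "h \<in> borel_measurable (PiM E M)"
    and hi: "\<And>d t. h (d(e := t)) = h d"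
  shows "{d \<in> space (PiM E M). d e = h d} \<in> null_sets (PiM E M)"
proof -
  interpret product_sigma_finite M by (rule psf)
  let ?I = "E - {e}"
  have EI: "E = insert e ?I" using E by auto
  let ?N = "{d \<in> space (PiM E M). d e = h d}"
  have compm: "(\<lambda>d. d e) \<in> borel_measurable (PiM E M)"
    using measurable_component_singleton[OF E(2), of M] sets
    by (metis measurable_cong_sets)
  have Nm: "?N \<in> sets (PiM E M)"
    by (rule measurable_equality_set[OF compm hm])
  have "emeasure (PiM E M) ?N = (\<integral>\<^sup>+ d. indicator ?N d \<partial>PiM E M)"
    using Nm by simp
  also have "\<dots> = (\<integral>\<^sup>+ x. (\<integral>\<^sup>+ y. indicator ?N (x(e := y)) \<partial>(M e)) \<partial>(PiM ?I M))"
  proof -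
    have "integral\<^sup>N (Pi\<^sub>M (insert e ?I) M) (indicator ?N) = (\<integral>\<^sup>+ x. (\<integral>\<^sup>+ y. indicator ?N (x(e := y)) \<partial>(M e)) \<partial>(PiM ?I M))"
      apply (rule product_nn_integral_insert)
      using E Nm EI by auto
    then show ?thesis using EI by simp
  qed
  also have "\<dots> = (\<integral>\<^sup>+ x. 0 \<partial>(PiM ?I M))"
  proof (rule nn_integral_cong)
    fix x assume "x \<in> space (PiM ?I M)"
    have "(\<integral>\<^sup>+ y. indicator ?N (x(e := y)) \<partial>(M e)) \<le> (\<integral>\<^sup>+ y. indicator {h (x(e := 0))} y \<partial>(M e))"
    proof (rule nn_integral_mono)
      fix y
      have "h (x(e := y)) = h (x(e := 0))" using hi[of "x(e:=0)" y] by simp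
      then show "indicator ?N (x(e := y)) \<le> (indicator {h (x(e := 0))} y :: ennreal)"
        by (auto simp: indicator_def)
    qed
    also have "\<dots> = emeasure (M e) {h (x(e := 0))}"
      using sets by (simp add: nn_integral_indicator)
    also have "\<dots> = 0" using at by simp
    finally show "(\<integral>\<^sup>+ y. indicator ?N (x(e := y)) \<partial>(M e)) = 0" by simp
  qed
  also have "\<dots> = 0" by simp
  finally show ?thesis using Nm by (simp add: null_sets_def)
qed

definition sc :: "real \<Rightarrow> ('a \<Rightarrow> real) \<Rightarrow> 'a \<Rightarrow> real" where
  "sc c f = (\<lambda>x. c * f x)"

lemma vs_sc: "vector_space (sc :: real \<Rightarrow> ('a \<Rightarrow> real) \<Rightarrow> 'a \<Rightarrow> real)"
  by unfold_locales (auto simp: sc_def fun_eq_iff algebra_simps)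

lemma module_sc: "module (sc :: real \<Rightarrow> ('a \<Rightarrow> real) \<Rightarrow> 'a \<Rightarrow> real)"
  using vs_sc module_iff_vector_space by blast

lemma vsp_sc: "vector_space_pair (sc :: real \<Rightarrow> ('a \<Rightarrow> real) \<Rightarrow> 'a \<Rightarrow> real)
   (sc :: real \<Rightarrow> ('b \<Rightarrow> real) \<Rightarrow> 'b \<Rightarrow> real)"
  unfolding vector_space_pair_def by (simp add: vs_sc)

definition LB :: "('v \<times> 'v \<Rightarrow> real) \<Rightarrow> ('v \<times> 'v) set \<Rightarrow> ('v \<Rightarrow> real) \<Rightarrow> ('v \<times> 'v \<Rightarrow> real)" where
  "LB lam B x = (\<lambda>b. if b \<in> B then x (fst b) - lam b * x (snd b) else 0)"

lemma linear_LB: "Vector_Spaces.linear sc sc (LB lam B)"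
  unfolding module_hom_iff_linear[symmetric] module_hom_iff
  by (auto simp: module_sc LB_def sc_def fun_eq_iff algebra_simps)

definition GB :: "('v \<times> 'v \<Rightarrow> real) \<Rightarrow> ('v \<times> 'v) set \<Rightarrow> ('v \<times> 'v \<Rightarrow> real) \<Rightarrow> ('v \<Rightarrow> real)" where
  "GB lam B = (SOME g. Vector_Spaces.linear sc sc g \<and> g \<circ> LB lam B = id)"

lemma GB:
  assumes "inj (LB lam B)"
  shows "Vector_Spaces.linear sc sc (GB lam B)" "\<And>x. GB lam B (LB lam B x) = x"
proof -
  have "\<exists>g. Vector_Spaces.linear sc sc g \<and> g \<circ> LB lam B = id"
    using vector_space_pair.linear_injective_left_inverse[OF vsp_sc linear_LB assms] .
  then have "Vector_Spaces.linear sc sc (GB lam B) \<and> GB lam B \<circ> LB lam B = id"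
    unfolding GB_def by (rule someI_ex)
  then show "Vector_Spaces.linear sc sc (GB lam B)" "\<And>x. GB lam B (LB lam B x) = x"
    by (auto simp: fun_eq_iff)
qed

definition ind :: "'a \<Rightarrow> 'a \<Rightarrow> real" where "ind b = (\<lambda>j. if j = b then 1 else 0)"

lemma sum_fun_apply: "(\<Sum>b\<in>A. f b) j = (\<Sum>b\<in>A. (f b j :: real))"
  by (induction A rule: infinite_finite_induct) auto

lemma GB_expand:
  assumes "inj (LB lam B)" "finite B"
  shows "GB lam B (\<lambda>b. if b \<in> B then r b else 0) v = (\<Sum>b\<in>B. r b * GB lam B (ind b) v)"
proof -
  have lin: "module_hom sc sc (GB lam B)" using GB(1)[OF assms(1)] module_hom_iff_linear by blast
  have eq: "(\<lambda>b. if b \<in> B then r b else 0) = (\<Sum>b\<in>B. sc (r b) (ind b))"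
    using assms(2) by (auto simp: fun_eq_iff sum_fun_apply sc_def ind_def if_distrib sum.delta cong: if_cong)
  have "GB lam B (\<Sum>b\<in>B. sc (r b) (ind b)) = (\<Sum>b\<in>B. sc (r b) (GB lam B (ind b)))"
    by (simp add: module_hom.sum[OF lin] module_hom.scale[OF lin])
  then show ?thesis unfolding eq by (simp add: sum_fun_apply sc_def)
qed

lemma inj_LB:
  assumes "\<exists>!x. \<forall>e\<in>B. tight w lam e x"
  shows "inj (LB lam B)"
proof (rule injI)
  fix x y assume xy: "LB lam B x = LB lam B y"
  obtain x0 where x0: "\<forall>e\<in>B. tight w lam e x0" and un: "\<And>z. \<forall>e\<in>B. tight w lam e z \<Longrightarrow> z = x0"
    using assms by blast
  let ?z = "\<lambda>v. x0 v + x v - y v"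
  have "\<forall>e\<in>B. tight w lam e ?z"
  proof
    fix e assume e: "e \<in> B"
    have "x (fst e) - lam e * x (snd e) = y (fst e) - lam e * y (snd e)"
      using fun_cong[OF xy, of e] e by (simp add: LB_def)
    then show "tight w lam e ?z" using x0 e by (auto simp: tight_def algebra_simps)
  qed
  then have "?z = x0" by (rule un)
  then show "x = y" by (auto simp: fun_eq_iff dest: fun_cong)
qed

definition hh :: "('v \<times> 'v \<Rightarrow> real) \<Rightarrow> ('v \<times> 'v \<Rightarrow> real) \<Rightarrow> ('v \<times> 'v) set \<Rightarrow> 'v \<times> 'v
   \<Rightarrow> ('v \<times> 'v \<Rightarrow> real) \<Rightarrow> real" where
  "hh w lam B e d = (\<Sum>b\<in>B. (w b + d b) * GB lam B (ind b) (fst e))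
      - lam e * (\<Sum>b\<in>B. (w b + d b) * GB lam B (ind b) (snd e)) - w e"

theorem lemma4p6:
  fixes Vmin Vmax :: "'v::finite set" and E :: "('v \<times> 'v) set"
    and w lam :: "'v \<times> 'v \<Rightarrow> real" and \<epsilon> :: real
  assumes "dpg Vmin Vmax E lam" and "\<epsilon> > 0"
  shows "AE \<delta> in PiM E (\<lambda>_. uniform_measure lborel {-\<epsilon><..<\<epsilon>}).
           sharp Vmin Vmax E (\<lambda>e. w e + \<delta> e) lam"
proof -
  define M :: "'v \<times> 'v \<Rightarrow> real measure" where "M = (\<lambda>_. uniform_measure lborel {-\<epsilon><..<\<epsilon>})"
  have finE: "finite E" by simp
  have ps: "prob_space (M i)" for i
    unfolding M_def using assms(2) by (intro prob_space_uniform_measure) auto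
  have psf: "product_sigma_finite M"
    unfolding product_sigma_finite_def using ps prob_space_imp_sigma_finite by blast
  have sp: "\<And>i. space (M i) = UNIV" by (simp add: M_def)
  have setsM: "\<And>i. sets (M i) = sets borel" by (simp add: M_def)
  have at: "\<And>i c. emeasure (M i) {c} = 0" by (simp add: M_def Int_insert_right)
  have comp: "(\<lambda>d. d b) \<in> borel_measurable (PiM E M)" if "b \<in> E" for b
    using measurable_component_singleton[OF that, of M] setsM
    by (metis measurable_cong_sets)
  define N where "N = (\<lambda>(B, e). if inj (LB lam B) \<and> e \<notin> B
     then {d \<in> space (PiM E M). d e = hh w lam B e d} else {})"
  have Nnull: "N p \<in> null_sets (PiM E M)" if "p \<in> Pow E \<times> E" for p
  proof -
    obtain B e where p: "p = (B, e)" by (cases p) blast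
    show ?thesis
    proof (cases "inj (LB lam B) \<and> e \<notin> B")
      case True
      have BE: "B \<subseteq> E" "e \<in> E" using that p by auto
      have sm: "(\<lambda>d. \<Sum>b\<in>B. (w b + d b) * c b) \<in> borel_measurable (PiM E M)" for c
        using BE comp by (intro borel_measurable_sum borel_measurable_times borel_measurable_add) auto
      have hm: "hh w lam B e \<in> borel_measurable (PiM E M)"
        unfolding hh_def using sm by (intro borel_measurable_diff borel_measurable_times) auto
      have hi: "hh w lam B e (d(e := t)) = hh w lam B e d" for d t
        unfolding hh_def using True by (intro arg_cong2[where f="(-)"] arg_cong2[where f="(*)"] sum.cong refl arg_cong2[where f="(+)"]) auto
      show ?thesis using graph_null[OF psf finite_subset[OF _ finE] BE(2) sp at setsM hm hi] True p N_def by simp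
    next
      case False
      then show ?thesis using p N_def by auto
    qed
  qed
  have "(\<Union>p\<in>Pow E \<times> E. N p) \<in> null_sets (PiM E M)"
    by (rule null_sets_UN') (auto intro: countable_finite Nnull)
  moreover have "{d \<in> space (PiM E M). \<not> sharp Vmin Vmax E (\<lambda>e. w e + d e) lam} \<subseteq> (\<Union>p\<in>Pow E \<times> E. N p)"
  proof
    fix d assume d: "d \<in> {d \<in> space (PiM E M). \<not> sharp Vmin Vmax E (\<lambda>e. w e + d e) lam}"
    let ?w = "\<lambda>e. w e + d e"
    obtain B x where bv: "basis_valuation Vmin Vmax E ?w lam B x"
      and cd: "card {e\<in>E. tight ?w lam e x} \<noteq> CARD('v)"
      using d unfolding sharp_def by blast
    have BE: "B \<subseteq> E" and cB: "card B = CARD('v)" and ex: "\<exists>!x. \<forall>e\<in>B. tight ?w lam e x"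
      and tB: "\<forall>e\<in>B. tight ?w lam e x"
      using bv unfolding basis_valuation_def is_basis_def by auto
    have "\<not> {e\<in>E. tight ?w lam e x} \<subseteq> B"
    proof
      assume "{e\<in>E. tight ?w lam e x} \<subseteq> B"
      then have "{e\<in>E. tight ?w lam e x} = B" using BE tB by auto
      then show False using cd cB by simp
    qed
    then obtain e where e: "e \<in> E" "e \<notin> B" "tight ?w lam e x" by auto
    have inj: "inj (LB lam B)" using inj_LB[OF ex] .
    have "LB lam B x = (\<lambda>b. if b \<in> B then w b + d b else 0)"
      using tB by (auto simp: LB_def tight_def fun_eq_iff)
    then have xe: "x = GB lam B (\<lambda>b. if b \<in> B then w b + d b else 0)"
      using GB(2)[OF inj, of x] by simp
    have finB: "finite B" using finite_subset[OF BE finE] .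
    have "d e = hh w lam B e d"
      using e(3) unfolding hh_def tight_def xe GB_expand[OF inj finB] by simp
    then have "d \<in> N (B, e)" using d inj e by (simp add: N_def)
    then show "d \<in> (\<Union>p\<in>Pow E \<times> E. N p)" using BE e by blast
  qed
  ultimately show ?thesis unfolding M_def[symmetric] by (rule AE_I')
qed

end
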